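(* Let $\mathcal T$ be a triangulation of a compact oriented surface $S$ (possibly with boundary), with vertex set $V$ and boundary vertex set $V_\partial$. For every non-empty subset $A\subseteq V$, $$2|A|-|F(A)|+|Lk(A)|-|A\cap V_\partial|=2\chi(G(A)\setminus\partial S)+\chi(G(A)\cap\partial S).$$
   Context: $F(A)$ is the set of triangles of $\mathcal T$ having at least one vertex in $A$. $Lk(A)$ is the set of pairs $(e,v)$ with $v\in A$, $e$ an edge with no endpoint in $A$, and $e,v$ forming a triangle of $\mathcal T$. $G(A)$ is the union of the open cells (vertices, open edges, open triangles) of $\mathcal T$ having at least one vertex in $A$; for a union $X$ of open cells, $\chi(X)$ denotes the number of $0$-cells minus the number of $1$-cells plus the number of $2$-cells contained in $X$; $G(A)\setminus\partial S$ (resp. $G(A)\cap\partial S$) consists of the cells of $G(A)$ not contained (resp. contained) in $\partial S$. *)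

theory Defs
  imports Main
begin

text \<open>A finite triangulated surface is modelled combinatorially as a finite set T of
triangles, each a 3-element set of vertices (a simplicial complex).
Cells are represented by their vertex sets: vertices {v}, edges {u,v}, triangles.\<close>

definition vertices :: "'a set set \<Rightarrow> 'a set" where
  "vertices T = \<Union>T"

definition edges :: "'a set set \<Rightarrow> 'a set set" where
  "edges T = {e. card e = 2 \<and> (\<exists>t\<in>T. e \<subseteq> t)}"

definition cells :: "'a set set \<Rightarrow> 'a set set" where
  "cells T = {c. c \<noteq> {} \<and> (\<exists>t\<in>T. c \<subseteq> t)}"

definition bedges :: "'a set set \<Rightarrow> 'a set set" where
  "bedges T = {e \<in> edges T. card {t \<in> T. e \<subseteq> t} = 1}"

definition bvertices :: "'a set set \<Rightarrow> 'a set" where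
  "bvertices T = \<Union>(bedges T)"

definition bcells :: "'a set set \<Rightarrow> 'a set set" where
  "bcells T = {c \<in> cells T. \<exists>e \<in> bedges T. c \<subseteq> e}"

definition link_edges :: "'a set set \<Rightarrow> 'a \<Rightarrow> 'a set set" where
  "link_edges T v = {e. v \<notin> e \<and> insert v e \<in> T}"

definition link_rel :: "'a set set \<Rightarrow> 'a \<Rightarrow> ('a \<times> 'a) set" where
  "link_rel T v = {(x, y). {x, y} \<in> link_edges T v}"

definition darts :: "'a \<times> 'a \<times> 'a \<Rightarrow> ('a \<times> 'a) set" where
  "darts o3 = (case o3 of (x, y, z) \<Rightarrow> {(x, y), (y, z), (z, x)})"

text \<open>T triangulates a compact (finite) surface, possibly with boundary:
 every edge lies in one or two triangles and the link of every vertex is connected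
 (hence a path or a cycle). It is oriented: triangles carry cyclic orders such that
 no directed edge occurs in two different triangles (coherent orientation).\<close>
definition triangulated_oriented_surface :: "'a set set \<Rightarrow> bool" where
  "triangulated_oriented_surface T \<longleftrightarrow>
     finite T \<and>
     (\<forall>t\<in>T. card t = 3) \<and>
     (\<forall>e\<in>edges T. card {t \<in> T. e \<subseteq> t} \<in> {1, 2}) \<and>
     (\<forall>v\<in>vertices T. \<forall>x\<in>\<Union>(link_edges T v). \<forall>y\<in>\<Union>(link_edges T v).
         (x, y) \<in> (link_rel T v)\<^sup>*) \<and>
     (\<exists>ori :: 'a set \<Rightarrow> 'a \<times> 'a \<times> 'a.
         (\<forall>t\<in>T. (case ori t of (x, y, z) \<Rightarrow> {x, y, z} = t)) \<and>
         (\<forall>t\<in>T. \<forall>t'\<in>T. darts (ori t) \<inter> darts (ori t') \<noteq> {} \<longrightarrow> t = t'))"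

definition Fset :: "'a set set \<Rightarrow> 'a set \<Rightarrow> 'a set set" where
  "Fset T A = {t \<in> T. t \<inter> A \<noteq> {}}"

definition Lk :: "'a set set \<Rightarrow> 'a set \<Rightarrow> ('a set \<times> 'a) set" where
  "Lk T A = {(e, v). v \<in> A \<and> e \<in> edges T \<and> e \<inter> A = {} \<and> insert v e \<in> T}"

definition Gcells :: "'a set set \<Rightarrow> 'a set \<Rightarrow> 'a set set" where
  "Gcells T A = {c \<in> cells T. c \<inter> A \<noteq> {}}"

text \<open>Euler characteristic of a union of open cells\<close>
definition chi :: "'a set set \<Rightarrow> int" where
  "chi X = (\<Sum>c\<in>X. (-1) ^ (card c - 1))"

end

theory Submission
  imports Defs
begin

lemma chi_split:
  assumes "finite X" shows "chi X = chi (X - B) + chi (X \<inter> B)"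
  unfolding chi_def using assms
  by (simp add: sum.Int_Diff[of X _ B])

lemma chi_card:
  assumes "finite X" and "\<forall>c\<in>X. card c \<in> {1,2,3}"
  shows "chi X = int (card {c\<in>X. card c = 1}) - int (card {c\<in>X. card c = 2})
                 + int (card {c\<in>X. card c = 3})"
proof -
  have X: "X = {c\<in>X. card c = 1} \<union> {c\<in>X. card c = 2} \<union> {c\<in>X. card c = 3}"
    using assms(2) by auto
  have "chi X = (\<Sum>c\<in>{c\<in>X. card c = 1} \<union> {c\<in>X. card c = 2} \<union> {c\<in>X. card c = 3}. (-1) ^ (card c - 1))"
    unfolding chi_def using X by simp
  also have "\<dots> = (\<Sum>c\<in>{c\<in>X. card c = 1}. (-1) ^ (card c - 1))
      + (\<Sum>c\<in>{c\<in>X. card c = 2}. (-1) ^ (card c - 1))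
      + (\<Sum>c\<in>{c\<in>X. card c = 3}. (-1) ^ (card c - 1))"
    using assms(1) by (simp add: sum.union_disjoint disjoint_iff Int_Un_distrib2)
  also have "\<dots> = (\<Sum>c\<in>{c\<in>X. card c = 1}. 1)
      + (\<Sum>c\<in>{c\<in>X. card c = 2}. -1)
      + (\<Sum>c\<in>{c\<in>X. card c = 3}. 1::int)"
    by (intro arg_cong2[where f="(+)"] sum.cong) auto
  finally show ?thesis by (simp only: sum_constant sum_negf)
qed

theorem lemma2p5:
  fixes T :: "'a set set" and A :: "'a set"
  assumes "triangulated_oriented_surface T"
    and "A \<subseteq> vertices T" and "A \<noteq> {}"
  shows "2 * int (card A) - int (card (Fset T A)) + int (card (Lk T A))
           - int (card (A \<inter> bvertices T))
         = 2 * chi (Gcells T A - bcells T) + chi (Gcells T A \<inter> bcells T)"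
proof -
  have finT: "finite T" and c3: "\<And>t. t \<in> T \<Longrightarrow> card t = 3"
    and ecnt: "\<And>e. e \<in> edges T \<Longrightarrow> card {t \<in> T. e \<subseteq> t} \<in> {1, 2}"
    using assms(1) unfolding triangulated_oriented_surface_def by auto
  have fint: "\<And>t. t \<in> T \<Longrightarrow> finite t" by (rule card_ge_0_finite) (simp add: c3)
  have finU: "finite (\<Union>T)" using finT fint by blast
  have finPow: "finite (Pow (\<Union>T))" using finU by simp
  have cellsPow: "cells T \<subseteq> Pow (\<Union>T)" unfolding cells_def by auto
  have edgesPow: "edges T \<subseteq> Pow (\<Union>T)" unfolding edges_def by auto
  have fincells: "finite (cells T)" using cellsPow finPow finite_subset by blast
  have finedges: "finite (edges T)" using edgesPow finPow finite_subset by blast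
  have finA: "finite A" using assms(2) finU unfolding vertices_def using finite_subset by blast
  define G where "G = Gcells T A"
  define B where "B = bcells T"
  define F where "F = Fset T A"
  define EA where "EA = {e \<in> edges T. e \<inter> A \<noteq> {}}"
  define BA where "BA = {e \<in> bedges T. e \<inter> A \<noteq> {}}"
  have finG: "finite G" unfolding G_def Gcells_def using fincells by simp
  have finF: "finite F" unfolding F_def Fset_def using finT by simp
  have finEA: "finite EA" unfolding EA_def using finedges by simp
  have bedges_sub: "bedges T \<subseteq> edges T" unfolding bedges_def by auto
  have BAsub: "BA \<subseteq> EA" unfolding BA_def EA_def using bedges_sub by auto
  have cardc: "\<And>c. c \<in> cells T \<Longrightarrow> card c \<in> {1,2,3}"
  proof -
    fix c assume "c \<in> cells T"
    then obtain t where t: "t \<in> T" "c \<subseteq> t" "c \<noteq> {}" unfolding cells_def by auto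
    have "finite c" using t fint finite_subset by blast
    hence "card c \<ge> 1" using t(3) by (simp add: Suc_le_eq card_gt_0_iff)
    moreover have "card c \<le> 3" using t c3 fint card_mono by metis
    ultimately show "card c \<in> {1,2,3}" by auto
  qed
  have G1: "{c\<in>G. card c = 1} = (\<lambda>v. {v}) ` A"
  proof
    show "{c\<in>G. card c = 1} \<subseteq> (\<lambda>v. {v}) ` A"
      unfolding G_def Gcells_def by (auto simp: card_Suc_eq)
    show "(\<lambda>v. {v}) ` A \<subseteq> {c\<in>G. card c = 1}"
      using assms(2) unfolding G_def Gcells_def cells_def vertices_def by auto
  qed
  have cG1: "card {c\<in>G. card c = 1} = card A" unfolding G1 by (simp add: card_image)
  have G2: "{c\<in>G. card c = 2} = EA"
    unfolding G_def Gcells_def EA_def cells_def edges_def by auto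
  have G3: "{c\<in>G. card c = 3} = F"
  proof
    show "{c\<in>G. card c = 3} \<subseteq> F"
    proof
      fix c assume "c \<in> {c\<in>G. card c = 3}"
      then obtain t where t: "t \<in> T" "c \<subseteq> t" "card c = 3" "c \<inter> A \<noteq> {}"
        unfolding G_def Gcells_def cells_def by auto
      have "c = t" using card_subset_eq[OF fint[OF t(1)] t(2)] t c3 by simp
      thus "c \<in> F" using t unfolding F_def Fset_def by auto
    qed
    show "F \<subseteq> {c\<in>G. card c = 3}"
    proof
      fix t assume "t \<in> F"
      hence t: "t \<in> T" "t \<inter> A \<noteq> {}" unfolding F_def Fset_def by auto
      thus "t \<in> {c\<in>G. card c = 3}" using c3[OF t(1)]
        unfolding G_def Gcells_def cells_def by auto
    qed
  qed
  have GB1: "{c\<in>G \<inter> B. card c = 1} = (\<lambda>v. {v}) ` (A \<inter> bvertices T)"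
  proof
    show "{c\<in>G \<inter> B. card c = 1} \<subseteq> (\<lambda>v. {v}) ` (A \<inter> bvertices T)"
      unfolding G_def Gcells_def B_def bcells_def bvertices_def by (auto simp: card_Suc_eq)
    show "(\<lambda>v. {v}) ` (A \<inter> bvertices T) \<subseteq> {c\<in>G \<inter> B. card c = 1}"
    proof
      fix c assume "c \<in> (\<lambda>v. {v}) ` (A \<inter> bvertices T)"
      then obtain v e where v: "c = {v}" "v \<in> A" "e \<in> bedges T" "v \<in> e"
        unfolding bvertices_def by auto
      then obtain t where "t \<in> T" "e \<subseteq> t" using bedges_sub unfolding edges_def by auto
      thus "c \<in> {c\<in>G \<inter> B. card c = 1}" using v
        unfolding G_def Gcells_def B_def bcells_def cells_def by auto
    qed
  qed
  have cGB1: "card {c\<in>G \<inter> B. card c = 1} = card (A \<inter> bvertices T)"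
    unfolding GB1 by (simp add: card_image)
  have GB2: "{c\<in>G \<inter> B. card c = 2} = BA"
  proof
    show "{c\<in>G \<inter> B. card c = 2} \<subseteq> BA"
    proof
      fix c assume "c \<in> {c\<in>G \<inter> B. card c = 2}"
      then obtain e where e: "e \<in> bedges T" "c \<subseteq> e" "card c = 2" "c \<inter> A \<noteq> {}"
        unfolding G_def Gcells_def B_def bcells_def by auto
      have ce: "card e = 2" using e(1) unfolding bedges_def edges_def by auto
      hence "finite e" by (intro card_ge_0_finite) simp
      hence "c = e" using card_subset_eq e ce by metis
      thus "c \<in> BA" using e unfolding BA_def by auto
    qed
    show "BA \<subseteq> {c\<in>G \<inter> B. card c = 2}"
    proof
      fix e assume "e \<in> BA"
      hence e: "e \<in> bedges T" "e \<inter> A \<noteq> {}" unfolding BA_def by auto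
      hence "e \<in> edges T" using bedges_sub by auto
      then obtain t where "t \<in> T" "e \<subseteq> t" "card e = 2" unfolding edges_def by auto
      thus "e \<in> {c\<in>G \<inter> B. card c = 2}" using e
        unfolding G_def Gcells_def B_def bcells_def cells_def by auto
    qed
  qed
  have GB3: "{c\<in>G \<inter> B. card c = 3} = {}"
  proof -
    { fix c e assume "e \<in> bedges T" "c \<subseteq> e" "card c = 3"
      hence ce: "card e = 2" unfolding bedges_def edges_def by auto
      hence "finite e" by (intro card_ge_0_finite) simp
      hence False using card_mono[OF _ \<open>c \<subseteq> e\<close>] ce \<open>card c = 3\<close> by simp }
    thus ?thesis unfolding B_def bcells_def by blast
  qed
  have chiG: "chi G = int (card A) - int (card EA) + int (card F)"
    using chi_card[OF finG] cardc cG1 G2 G3 unfolding G_def Gcells_def by auto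
  have chiGB: "chi (G \<inter> B) = int (card (A \<inter> bvertices T)) - int (card BA)"
  proof -
    have "\<forall>c\<in>G \<inter> B. card c \<in> {1,2,3}" using cardc unfolding G_def Gcells_def by auto
    thus ?thesis using chi_card[of "G \<inter> B"] finG cGB1 GB2 GB3 by simp
  qed
  define P where "P = {(e,t). t \<in> F \<and> card e = 2 \<and> e \<subseteq> t}"
  define P1 where "P1 = {(e,t). t \<in> F \<and> card e = 2 \<and> e \<subseteq> t \<and> e \<inter> A = {}}"
  define P2 where "P2 = {(e,t). t \<in> F \<and> card e = 2 \<and> e \<subseteq> t \<and> e \<inter> A \<noteq> {}}"
  have Psig: "P = prod.swap ` (SIGMA t:F. {e. e \<subseteq> t \<and> card e = 2})"
    unfolding P_def by force
  have FT: "F \<subseteq> T" unfolding F_def Fset_def by auto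
  have cP: "card P = 3 * card F"
  proof -
    have "card P = card (SIGMA t:F. {e. e \<subseteq> t \<and> card e = 2})"
      unfolding Psig by (rule card_image) (simp add: inj_on_def)
    also have "\<dots> = (\<Sum>t\<in>F. card {e. e \<subseteq> t \<and> card e = 2})"
      using finF FT fint by (intro card_SigmaI) auto
    also have "\<dots> = (\<Sum>t\<in>F. 3)"
    proof (rule sum.cong)
      fix t assume "t \<in> F"
      hence "t \<in> T" using FT by auto
      thus "card {e. e \<subseteq> t \<and> card e = 2} = 3"
        using n_subsets[OF fint[OF \<open>t \<in> T\<close>], of 2] c3[OF \<open>t \<in> T\<close>]
        by (simp add: numeral_eq_Suc)
    qed simp
    finally show ?thesis by simp
  qed
  have P12: "P = P1 \<union> P2" "P1 \<inter> P2 = {}" unfolding P_def P1_def P2_def by auto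
  have finS: "finite {e. e \<subseteq> t \<and> card e = 2}" if "t \<in> F" for t
  proof -
    have "finite (Pow t)" using that FT fint by auto
    thus ?thesis by (rule rev_finite_subset) auto
  qed
  have finP: "finite P" unfolding Psig using finF finS by (intro finite_imageI finite_SigmaI) auto
  have finP1: "finite P1" "finite P2" using finP P12 by auto
  have cP12: "card P = card P1 + card P2" using P12 finP1 card_Un_disjoint by metis
  have cP1: "card P1 = card (Lk T A)"
  proof -
    have "bij_betw (\<lambda>(e,v). (e, insert v e)) (Lk T A) P1"
    proof (rule bij_betw_imageI)
      show "inj_on (\<lambda>(e,v). (e, insert v e)) (Lk T A)"
      proof (rule inj_onI)
        fix x y assume x: "x \<in> Lk T A" and y: "y \<in> Lk T A"
          and eq: "(\<lambda>(e,v). (e, insert v e)) x = (\<lambda>(e,v). (e, insert v e)) y"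
        obtain e v where xe: "x = (e, v)" by force
        obtain e' v' where ye: "y = (e', v')" by force
        have ee: "e = e'" and ii: "insert v e = insert v' e'" using eq xe ye by auto
        have "v \<notin> e" using x xe unfolding Lk_def by auto
        moreover have "v \<in> insert v' e" using ii ee by auto
        ultimately have "v = v'" by auto
        thus "x = y" using xe ye ee by simp
      qed
      show "(\<lambda>(e,v). (e, insert v e)) ` Lk T A = P1"
      proof
        show "(\<lambda>(e,v). (e, insert v e)) ` Lk T A \<subseteq> P1"
          unfolding Lk_def P1_def F_def Fset_def edges_def by auto
        show "P1 \<subseteq> (\<lambda>(e,v). (e, insert v e)) ` Lk T A"
        proof clarify
          fix e t assume "(e,t) \<in> P1"
          hence et: "t \<in> T" "t \<inter> A \<noteq> {}" "card e = 2" "e \<subseteq> t" "e \<inter> A = {}"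
            unfolding P1_def F_def Fset_def by auto
          then obtain v where v: "v \<in> t" "v \<in> A" by auto
          have ve: "v \<notin> e" using v et by auto
          have fe: "finite e" using et(3) by (intro card_ge_0_finite) simp
          have "insert v e \<subseteq> t" using v et by auto
          moreover have "card (insert v e) = 3" using ve fe et by simp
          ultimately have tv: "t = insert v e"
            using card_subset_eq[OF fint[OF et(1)]] c3[OF et(1)] by metis
          have "(e, v) \<in> Lk T A" unfolding Lk_def edges_def using et v tv by auto
          thus "(e, t) \<in> (\<lambda>(e,v). (e, insert v e)) ` Lk T A" using tv by force
        qed
      qed
    qed
    thus ?thesis by (simp add: bij_betw_same_card)
  qed
  have P2sig: "P2 = (SIGMA e:EA. {t \<in> T. e \<subseteq> t})"
    unfolding P2_def EA_def F_def Fset_def edges_def by blast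
  have cP2: "int (card P2) = 2 * int (card EA) - int (card BA)"
  proof -
    have "card P2 = (\<Sum>e\<in>EA. card {t \<in> T. e \<subseteq> t})"
      unfolding P2sig using finEA finT by (intro card_SigmaI) auto
    hence "int (card P2) = (\<Sum>e\<in>EA. int (card {t \<in> T. e \<subseteq> t}))" by simp
    also have "\<dots> = (\<Sum>e\<in>EA. 2 - (if e \<in> BA then 1 else 0))"
    proof (rule sum.cong)
      fix e assume e: "e \<in> EA"
      hence "e \<in> edges T" unfolding EA_def by auto
      thus "int (card {t \<in> T. e \<subseteq> t}) = 2 - (if e \<in> BA then 1 else 0)"
        using ecnt[of e] e unfolding BA_def bedges_def EA_def by auto
    qed simp
    also have "\<dots> = 2 * int (card EA) - (\<Sum>e\<in>EA. (if e \<in> BA then 1 else 0))"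
      by (simp add: sum_subtractf)
    also have "(\<Sum>e\<in>EA. (if e \<in> BA then 1 else 0)) = int (card BA)"
      using BAsub finEA by (simp add: sum.If_cases Int_absorb1)
    finally show ?thesis .
  qed
  have key: "3 * int (card F) = int (card (Lk T A)) + 2 * int (card EA) - int (card BA)"
    using cP cP12 cP1 cP2 by linarith
  have "2 * chi (G - B) + chi (G \<inter> B) = 2 * chi G - chi (G \<inter> B)"
    using chi_split[OF finG, of B] by simp
  hence "2 * chi (G - B) + chi (G \<inter> B) = 2 * int (card A) - int (card F) + int (card (Lk T A))
           - int (card (A \<inter> bvertices T))"
    using chiG chiGB key by linarith
  thus ?thesis unfolding G_def B_def F_def by simp
qed

end
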